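(* Let $g(x)=\alpha x^{q^k}+\beta x$ with $\alpha\in\mathbb{F}_{q^n}^*$, $\beta\in\mathbb{F}_{q^n}$, $1\le k<n$, let $f(y)=a_dy^{q^d}$ with $a_d\in\mathbb{F}_{q^n}^*$, $0\le d<n$, and let $0\le h<n$ with $h\ne d$. (1) If $\beta=0$, then $L_g\cap L_f\ne\emptyset$ if and only if $\mathrm{N}_{q^n/q^e}(a_d/\alpha)=1$, where $e=\gcd(n,k,d-h)$. (2) If $\beta\neq0$ and $k+|d-h|\le n/2$, then $L_g\cap L_f\neq\emptyset$.
   Context: Let $q$ be a prime power, $n\ge2$. For $e\mid n$, $\mathrm{N}_{q^n/q^e}(x)=x^{(q^n-1)/(q^e-1)}$; $\gcd$ is taken positive. For $q$-polynomials $g,f$ over $\mathbb{F}_{q^n}$ and an integer $0\le h<n$: $L_g=\{\langle(x,g(x))\rangle_{\mathbb{F}_{q^n}}:x\in\mathbb{F}_{q^n}^*\}$ and $L_f=\{\langle(y^{q^h},f(y))\rangle_{\mathbb{F}_{q^n}}:y\in\mathbb{F}_{q^n}^*\}$, points of $\mathrm{PG}(1,q^n)$. *)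

theory Defs
  imports "HOL-Computational_Algebra.Primes"
begin

text \<open>The point of PG(1,F) spanned by the nonzero vector (a,b): the 1-dimensional
  F-subspace {(c*a, c*b) | c}.\<close>
definition proj_pt :: "'a::field \<Rightarrow> 'a \<Rightarrow> ('a \<times> 'a) set" where
  "proj_pt a b = {(c * a, c * b) | c. True}"

definition L_graph :: "('a::field \<Rightarrow> 'a) \<Rightarrow> ('a \<times> 'a) set set" where
  "L_graph g = {proj_pt x (g x) | x. x \<noteq> 0}"

definition L_twisted :: "nat \<Rightarrow> nat \<Rightarrow> ('a::field \<Rightarrow> 'a) \<Rightarrow> ('a \<times> 'a) set set" where
  "L_twisted q h f = {proj_pt (y ^ (q ^ h)) (f y) | y. y \<noteq> 0}"

definition rel_norm :: "nat \<Rightarrow> nat \<Rightarrow> nat \<Rightarrow> 'a::field \<Rightarrow> 'a" where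
  "rel_norm q n e x = x ^ ((q ^ n - 1) div (q ^ e - 1))"

end

theory Submission
  imports Defs "HOL-Algebra.Algebraic_Closure_Type"
begin

lemma type_nat_pow: "x [^]\<^bsub>(ring_of_type_algebra :: 'a::field ring)\<^esub> (i::nat) = x ^ i"
  by (induction i) (auto simp: ring_of_type_algebra_def)

lemma field_gen_exists:
  "\<exists>g::'a::{finite,field}. \<forall>w. w \<noteq> 0 \<longrightarrow> (\<exists>i::nat. w = g ^ i)"
proof -
  interpret F: field "ring_of_type_algebra :: 'a ring" by (rule field_from_type_algebra)
  have fin: "finite (carrier (ring_of_type_algebra :: 'a ring))" by simp
  from F.finite_field_mult_group_has_gen[OF fin] obtain a where
    a: "carrier (mult_of (ring_of_type_algebra :: 'a ring)) = {a[^]\<^bsub>ring_of_type_algebra\<^esub> i | i::nat . i \<in> UNIV}"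
    by (auto simp: nat_pow_mult_of)
  have c: "carrier (mult_of (ring_of_type_algebra :: 'a ring)) = UNIV - {0}"
    by (simp add: ring_of_type_algebra_def)
  have "\<exists>i::nat. w = a ^ i" if "w \<noteq> 0" for w
  proof -
    have "w \<in> carrier (mult_of (ring_of_type_algebra :: 'a ring))" using c that by simp
    then obtain i :: nat where "w = a[^]\<^bsub>ring_of_type_algebra\<^esub> i" using a by blast
    then show ?thesis by (auto simp: type_nat_pow)
  qed
  then show ?thesis by blast
qed

lemma fermat:
  fixes x :: "'a::{finite,field}"
  assumes "x \<noteq> 0" shows "x ^ (card (UNIV::'a set) - 1) = 1"
proof -
  let ?S = "UNIV - {0::'a}"
  have bij: "bij_betw (\<lambda>y. x*y) ?S ?S"
    by (rule bij_betwI[where g="\<lambda>y. y/x"]) (use assms in auto)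
  have 1: "prod (\<lambda>y. x*y) ?S = prod (\<lambda>y. y) ?S"
    using prod.reindex_bij_betw[OF bij, of "\<lambda>y. y"] by simp
  have 2: "prod (\<lambda>y. x*y) ?S = x ^ card ?S * prod (\<lambda>y. y) ?S"
    by (simp add: prod.distrib)
  have 3: "prod (\<lambda>y. y) ?S \<noteq> 0" by simp
  have 4: "card ?S = card (UNIV::'a set) - 1" by (simp add: card_Diff_singleton)
  from 1 2 3 4 show ?thesis by (metis mult_cancel_right2)
qed

lemma card_two_le: "2 \<le> card (UNIV::'a::{finite,field} set)"
proof -
  have "card {0::'a, 1} \<le> card (UNIV::'a set)" by (rule card_mono) auto
  then show ?thesis by simp
qed

lemma pow_card_id:
  fixes x :: "'a::{finite,field}"
  shows "x ^ card (UNIV::'a set) = x"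
proof (cases "x = 0")
  case True then show ?thesis using card_two_le[where 'a='a] by simp
next
  case False
  have "card (UNIV::'a set) = Suc (card (UNIV::'a set) - 1)" using card_two_le[where 'a='a] by simp
  then have "x ^ card (UNIV::'a set) = x * x ^ (card (UNIV::'a set) - 1)" by (metis power_Suc)
  then show ?thesis using fermat[OF False] by simp
qed

locale fgen =
  fixes g :: "'a::{finite,field}" and L :: "'a \<Rightarrow> nat"
  assumes card_gt: "card (UNIV::'a set) > 2"
  and gen: "\<And>w. w \<noteq> 0 \<Longrightarrow> L w < card (UNIV::'a set) - 1 \<and> w = g ^ L w"
  and gord: "\<And>i. g ^ i = 1 \<longleftrightarrow> (card (UNIV::'a set) - 1) dvd i"

lemma fgen_exists:
  assumes "card (UNIV::'a::{finite,field} set) > 2"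
  shows "\<exists>(g::'a) L. fgen g L"
proof -
  define N where "N = card (UNIV::'a set) - 1"
  have N0: "N > 0" using assms by (simp add: N_def)
  obtain g :: 'a where g: "\<And>w. w \<noteq> 0 \<Longrightarrow> \<exists>i. w = g ^ i" using field_gen_exists by blast
  have "card (UNIV - {0::'a, 1}) > 0"
    using assms by (simp add: card_Diff_subset)
  then have "UNIV - {0::'a, 1} \<noteq> {}" by (metis card.empty less_irrefl)
  then obtain w :: 'a where "w \<in> UNIV - {0::'a, 1}" by blast
  then have w: "w \<noteq> 0" "w \<noteq> 1" by auto
  have gnz: "g \<noteq> 0"
  proof
    assume "g = 0"
    obtain i where "w = g ^ i" using g w by blast
    with \<open>g = 0\<close> w show False by (cases i) auto
  qed
  have gN: "g ^ N = 1" unfolding N_def by (rule fermat[OF gnz])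
  have gmod: "g ^ i = g ^ (i mod N)" for i
  proof -
    have "g ^ i = g ^ (N * (i div N) + i mod N)" by simp
    also have "\<dots> = (g ^ N) ^ (i div N) * g ^ (i mod N)" by (simp only: power_add power_mult)
    also have "\<dots> = g ^ (i mod N)" using gN by simp
    finally show ?thesis .
  qed
  have surj: "\<exists>i<N. w = g ^ i" if wz: "w \<noteq> 0" for w
  proof -
    obtain i where "w = g ^ i" using g wz by blast
    then show ?thesis using gmod[of i] N0 by (intro exI[of _ "i mod N"]) auto
  qed
  have img: "(\<lambda>i. g ^ i) ` {..<N} = UNIV - {0}"
    using surj gnz by auto
  have inj: "inj_on (\<lambda>i. g ^ i) {..<N}"
  proof -
    have "card ((\<lambda>i. g ^ i) ` {..<N}) = card {..<N}"
      unfolding img by (simp add: card_Diff_singleton N_def)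
    then show ?thesis by (simp add: inj_on_iff_eq_card)
  qed
  have gord: "g ^ i = 1 \<longleftrightarrow> N dvd i" for i
  proof
    assume "g ^ i = 1"
    then have "g ^ (i mod N) = g ^ 0" using gmod[of i] by simp
    then have "i mod N = 0" using inj_onD[OF inj] N0 by auto
    then show "N dvd i" by auto
  next
    assume "N dvd i"
    then show "g ^ i = 1" using gmod[of i] by simp
  qed
  define L where "L w = (SOME i. i < N \<and> w = g ^ i)" for w
  have "L w < N \<and> w = g ^ L w" if "w \<noteq> 0" for w
    unfolding L_def using someI_ex[OF surj[OF that]] .
  then have "fgen g L"
    using assms gord by (unfold_locales) (auto simp: N_def)
  then show ?thesis by blast
qed

lemma mchar_one:
  fixes f :: "'a::field \<Rightarrow> complex"
  assumes m: "\<And>x y. x \<noteq> 0 \<Longrightarrow> y \<noteq> 0 \<Longrightarrow> f (x*y) = f x * f y"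
    and u: "\<And>x. x \<noteq> 0 \<Longrightarrow> f x * cnj (f x) = 1"
  shows "f 1 = 1"
proof -
  have "f 1 = f 1 * f 1" using m[of 1 1] by simp
  moreover have "f 1 \<noteq> 0" using u[of 1] by auto
  ultimately show ?thesis by (simp add: mult_cancel_left1)
qed

lemma mchar_cnj:
  fixes f :: "'a::field \<Rightarrow> complex"
  assumes m: "\<And>x y. x \<noteq> 0 \<Longrightarrow> y \<noteq> 0 \<Longrightarrow> f (x*y) = f x * f y"
    and u: "\<And>x. x \<noteq> 0 \<Longrightarrow> f x * cnj (f x) = 1"
    and y: "y \<noteq> 0"
  shows "cnj (f y) = f (inverse y)"
proof -
  have "f y * f (inverse y) = 1" using m[of y "inverse y"] y mchar_one[OF m u] by simp
  moreover have "f y * cnj (f y) = 1" using u y by simp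
  moreover have "f y \<noteq> 0" using u[OF y] by auto
  ultimately have "f y * cnj (f y) = f y * f (inverse y) \<and> f y \<noteq> 0" by simp
  then show ?thesis using mult_left_cancel[of "f y" "cnj (f y)" "f (inverse y)"] by blast
qed

lemma mob1:
  fixes t y :: "'a::field"
  assumes "t \<noteq> 1" "y \<noteq> 1"
  shows "(1 - (1 - t*y)/(1 - y)) / (t - (1 - t*y)/(1 - y)) = y"
proof -
  have a: "1 - y \<noteq> 0" "t - 1 \<noteq> 0" using assms by auto
  have b: "1 - (1 - t*y)/(1 - y) = y*((t-1)/(1-y))" using a by (simp add: field_simps)
  have c: "t - (1 - t*y)/(1 - y) = (t-1)/(1-y)" using a by (simp add: field_simps)
  have d: "(t-1)/(1-y) \<noteq> 0" using a by simp
  show ?thesis unfolding b c using d by simp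
qed

lemma mob2:
  fixes t z :: "'a::field"
  assumes "t \<noteq> 1" "z \<noteq> t"
  shows "(1 - t*((1 - z)/(t - z))) / (1 - (1 - z)/(t - z)) = z"
proof -
  have a: "t - z \<noteq> 0" "t - 1 \<noteq> 0" using assms by auto
  have b: "1 - t*((1 - z)/(t - z)) = z*((t-1)/(t-z))" using a by (simp add: field_simps)
  have c: "1 - (1 - z)/(t - z) = (t-1)/(t-z)" using a by (simp add: field_simps)
  have d: "(t-1)/(t-z) \<noteq> 0" using a by simp
  show ?thesis unfolding b c using d by simp
qed

lemma mob_inner:
  fixes f2 :: "'a::{finite,field} \<Rightarrow> complex"
  assumes t: "t \<noteq> 0" "t \<noteq> 1"
  shows "(\<Sum>y\<in>{y. y \<in> UNIV - {0,1} \<and> t*y \<noteq> 1}. f2 ((1 - t*y)/(1 - y)))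
       = (\<Sum>z\<in>UNIV - {0} - {1,t}. f2 z)"
proof (rule sum.reindex_bij_witness[of _ "\<lambda>z. (1 - z)/(t - z)" "\<lambda>y. (1 - t*y)/(1 - y)"])
  fix y assume y: "y \<in> {y. y \<in> UNIV - {0,1} \<and> t*y \<noteq> 1}"
  then have y1: "y \<noteq> 1" "y \<noteq> 0" "t*y \<noteq> 1" by auto
  show "(1 - (1 - t*y)/(1 - y)) / (t - (1 - t*y)/(1 - y)) = y" by (rule mob1) (use t y1 in auto)
  have a: "1 - y \<noteq> 0" "1 - t*y \<noteq> 0" using y1 by auto
  have n0: "(1 - t*y)/(1 - y) \<noteq> 0" using a by simp
  have n1: "(1 - t*y)/(1 - y) \<noteq> 1"
  proof
    assume "(1 - t*y)/(1 - y) = 1"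
    then have "1 - t*y = 1 - y" using a by (simp add: field_simps)
    then have "(t - 1) * y = 0" by (simp add: algebra_simps)
    then show False using t y1 by simp
  qed
  have nt: "(1 - t*y)/(1 - y) \<noteq> t"
  proof
    assume "(1 - t*y)/(1 - y) = t"
    then have "1 - t*y = t*(1 - y)" using a by (simp add: field_simps)
    then show False using t by (simp add: algebra_simps)
  qed
  show "(1 - t*y)/(1 - y) \<in> UNIV - {0} - {1,t}" using n0 n1 nt by auto
next
  fix z assume z: "z \<in> UNIV - {0} - {1,t}"
  then have z1: "z \<noteq> 0" "z \<noteq> 1" "z \<noteq> t" by auto
  show "(1 - t*((1 - z)/(t - z))) / (1 - (1 - z)/(t - z)) = z" by (rule mob2) (use t z1 in auto)
  have a: "t - z \<noteq> 0" "1 - z \<noteq> 0" using z1 by auto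
  have n0: "(1 - z)/(t - z) \<noteq> 0" using a by simp
  have n1: "(1 - z)/(t - z) \<noteq> 1"
  proof
    assume "(1 - z)/(t - z) = 1"
    then have "1 - z = t - z" using a by (simp add: field_simps)
    then show False using t by simp
  qed
  have nt: "t * ((1 - z)/(t - z)) \<noteq> 1"
  proof
    assume "t * ((1 - z)/(t - z)) = 1"
    then have "t * (1 - z) = t - z" using a by (simp add: field_simps)
    then have "(t - 1) * z = 0" by (simp add: algebra_simps)
    then show False using t z1 by simp
  qed
  show "(1 - z)/(t - z) \<in> {y. y \<in> UNIV - {0,1} \<and> t*y \<noteq> 1}" using n0 n1 nt by auto
next
  fix y assume "y \<in> {y. y \<in> UNIV - {0,1} \<and> t*y \<noteq> 1}"
  show "f2 ((1 - t*y)/(1 - y)) = f2 ((1 - t*y)/(1 - y))" ..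
qed



lemma jacobi_identity:
  fixes f1 f2 :: "'a::{finite,field} \<Rightarrow> complex"
  assumes m1: "\<And>x y. x \<noteq> 0 \<Longrightarrow> y \<noteq> 0 \<Longrightarrow> f1 (x*y) = f1 x * f1 y"
    and m2: "\<And>x y. x \<noteq> 0 \<Longrightarrow> y \<noteq> 0 \<Longrightarrow> f2 (x*y) = f2 x * f2 y"
    and u1: "\<And>x. x \<noteq> 0 \<Longrightarrow> f1 x * cnj (f1 x) = 1"
    and u2: "\<And>x. x \<noteq> 0 \<Longrightarrow> f2 x * cnj (f2 x) = 1"
  shows "(\<Sum>s\<in>UNIV-{0,1}. f1 s * f2 (1-s)) * cnj (\<Sum>s\<in>UNIV-{0,1}. f1 s * f2 (1-s)) =
     of_nat (card (UNIV::'a set)) - 1 + ((\<Sum>z\<in>UNIV-{0}. f2 z) - 1) * ((\<Sum>z\<in>UNIV-{0}. f1 z) - 1)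
       - (\<Sum>z\<in>UNIV-{0}. f1 z * f2 z)"
proof -
  define S2 where "S2 = (UNIV - {0,1} :: 'a set)"
  define S where "S = (UNIV - {0} :: 'a set)"
  define T1 where "T1 = (\<Sum>z\<in>S. f1 z)"
  define T2 where "T2 = (\<Sum>z\<in>S. f2 z)"
  define T12 where "T12 = (\<Sum>z\<in>S. f1 z * f2 z)"
  have one1: "f1 1 = 1" by (rule mchar_one[OF m1 u1])
  have one2: "f2 1 = 1" by (rule mchar_one[OF m2 u2])
  have trm: "f1 x * f2 (1-x) * (cnj (f1 y) * cnj (f2 (1-y))) = f1 (x/y) * f2 ((1-x)/(1-y))"
    if "x \<in> S2" "y \<in> S2" for x y
  proof -
    have nz: "x \<noteq> 0" "y \<noteq> 0" "1-x \<noteq> 0" "1-y \<noteq> 0" using that by (auto simp: S2_def)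
    have a: "f1 (x/y) = f1 x * f1 (inverse y)" using m1[of x "inverse y"] nz by (simp add: divide_inverse)
    have b: "f2 ((1-x)/(1-y)) = f2 (1-x) * f2 (inverse (1-y))"
      using m2[of "1-x" "inverse (1-y)"] nz by (simp add: divide_inverse)
    have c: "cnj (f1 y) = f1 (inverse y)" by (rule mchar_cnj[OF m1 u1 nz(2)])
    have d: "cnj (f2 (1-y)) = f2 (inverse (1-y))" by (rule mchar_cnj[OF m2 u2 nz(4)])
    show ?thesis unfolding a b c d by (simp add: mult_ac)
  qed
  have step1: "(\<Sum>s\<in>S2. f1 s * f2 (1-s)) * cnj (\<Sum>s\<in>S2. f1 s * f2 (1-s))
      = (\<Sum>y\<in>S2. \<Sum>x\<in>S2. f1 (x/y) * f2 ((1-x)/(1-y)))"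
  proof -
    have "(\<Sum>s\<in>S2. f1 s * f2 (1-s)) * cnj (\<Sum>s\<in>S2. f1 s * f2 (1-s))
       = (\<Sum>x\<in>S2. f1 x * f2 (1-x)) * (\<Sum>y\<in>S2. cnj (f1 y) * cnj (f2 (1-y)))" by simp
    also have "\<dots> = (\<Sum>x\<in>S2. \<Sum>y\<in>S2. f1 x * f2 (1-x) * (cnj (f1 y) * cnj (f2 (1-y))))"
      by (rule sum_product)
    also have "\<dots> = (\<Sum>y\<in>S2. \<Sum>x\<in>S2. f1 x * f2 (1-x) * (cnj (f1 y) * cnj (f2 (1-y))))"
      by (rule sum.swap)
    also have "\<dots> = (\<Sum>y\<in>S2. \<Sum>x\<in>S2. f1 (x/y) * f2 ((1-x)/(1-y)))"
      using trm by (intro sum.cong refl) auto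
    finally show ?thesis .
  qed
  have step2: "(\<Sum>x\<in>S2. f1 (x/y) * f2 ((1-x)/(1-y)))
      = (\<Sum>t\<in>{t. t \<in> S \<and> t*y \<noteq> 1}. f1 t * f2 ((1-t*y)/(1-y)))" if y: "y \<in> S2" for y
  proof (rule sum.reindex_bij_witness[of _ "\<lambda>t. t*y" "\<lambda>x. x/y"])
    have yz: "y \<noteq> 0" using y by (auto simp: S2_def)
    fix x assume x: "x \<in> S2"
    show "x / y * y = x" using yz by simp
    show "x / y \<in> {t. t \<in> S \<and> t * y \<noteq> 1}" using x yz by (auto simp: S2_def S_def)
    show "f1 (x / y) * f2 ((1 - x / y * y) / (1 - y)) = f1 (x/y) * f2 ((1-x)/(1-y))" using yz by simp
  next
    have yz: "y \<noteq> 0" using y by (auto simp: S2_def)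
    fix t assume t: "t \<in> {t. t \<in> S \<and> t * y \<noteq> 1}"
    show "t * y / y = t" using yz by simp
    show "t * y \<in> S2" using t yz by (auto simp: S2_def S_def)
  qed
  have step3: "(\<Sum>y\<in>S2. \<Sum>t\<in>{t. t \<in> S \<and> t*y \<noteq> 1}. f1 t * f2 ((1-t*y)/(1-y)))
      = (\<Sum>t\<in>S. \<Sum>y\<in>{y. y \<in> S2 \<and> t*y \<noteq> 1}. f1 t * f2 ((1-t*y)/(1-y)))"
    by (rule sum.swap_restrict) auto
  have inner1: "(\<Sum>y\<in>{y. y \<in> S2 \<and> 1*y \<noteq> 1}. f1 1 * f2 ((1-1*y)/(1-y))) = of_nat (card (UNIV::'a set)) - 2"
  proof -
    have e: "{y. y \<in> S2 \<and> 1*y \<noteq> 1} = S2" by (auto simp: S2_def)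
    have "(\<Sum>y\<in>S2. f1 1 * f2 ((1-1*y)/(1-y))) = (\<Sum>y\<in>S2. (1::complex))"
      using one1 one2 by (intro sum.cong refl) (auto simp: S2_def)
    also have "\<dots> = of_nat (card S2)" by simp
    also have "card S2 = card (UNIV::'a set) - 2"
      unfolding S2_def by (subst card_Diff_subset) auto
    also have "of_nat (card (UNIV::'a set) - 2) = (of_nat (card (UNIV::'a set)) - 2 :: complex)"
      using card_two_le[where 'a='a] by (simp add: of_nat_diff)
    finally show ?thesis unfolding e .
  qed
  have inner2: "(\<Sum>y\<in>{y. y \<in> S2 \<and> t*y \<noteq> 1}. f1 t * f2 ((1-t*y)/(1-y))) = f1 t * (T2 - 1 - f2 t)"
    if t: "t \<in> S2" for t
  proof -
    have t01: "t \<noteq> 0" "t \<noteq> 1" using t by (auto simp: S2_def)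
    have "(\<Sum>y\<in>{y. y \<in> S2 \<and> t*y \<noteq> 1}. f1 t * f2 ((1-t*y)/(1-y)))
        = f1 t * (\<Sum>y\<in>{y. y \<in> S2 \<and> t*y \<noteq> 1}. f2 ((1-t*y)/(1-y)))"
      by (simp add: sum_distrib_left)
    also have "(\<Sum>y\<in>{y. y \<in> S2 \<and> t*y \<noteq> 1}. f2 ((1-t*y)/(1-y))) = (\<Sum>z\<in>S - {1,t}. f2 z)"
      unfolding S2_def S_def by (rule mob_inner[OF t01])
    also have "\<dots> = T2 - (\<Sum>z\<in>{1,t}. f2 z)"
      unfolding T2_def by (rule sum_diff) (use t01 in \<open>auto simp: S_def\<close>)
    also have "(\<Sum>z\<in>{1,t}. f2 z) = 1 + f2 t" using t01 one2 by simp
    finally show ?thesis by (simp add: algebra_simps)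
  qed
  have SS: "S = insert 1 S2" by (auto simp: S_def S2_def)
  have step4: "(\<Sum>t\<in>S. \<Sum>y\<in>{y. y \<in> S2 \<and> t*y \<noteq> 1}. f1 t * f2 ((1-t*y)/(1-y)))
     = (of_nat (card (UNIV::'a set)) - 2) + (\<Sum>t\<in>S2. f1 t * (T2 - 1 - f2 t))"
  proof -
    have "(\<Sum>t\<in>S. \<Sum>y\<in>{y. y \<in> S2 \<and> t*y \<noteq> 1}. f1 t * f2 ((1-t*y)/(1-y)))
      = (\<Sum>y\<in>{y. y \<in> S2 \<and> 1*y \<noteq> 1}. f1 1 * f2 ((1-1*y)/(1-y)))
        + (\<Sum>t\<in>S2. \<Sum>y\<in>{y. y \<in> S2 \<and> t*y \<noteq> 1}. f1 t * f2 ((1-t*y)/(1-y)))"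
      unfolding SS by (subst sum.insert) (auto simp: S2_def)
    also have "\<dots> = (of_nat (card (UNIV::'a set)) - 2) + (\<Sum>t\<in>S2. f1 t * (T2 - 1 - f2 t))"
      using inner1 inner2 by simp
    finally show ?thesis .
  qed
  have sumS2_1: "(\<Sum>t\<in>S2. f1 t) = T1 - 1"
    unfolding T1_def SS using one1 by (subst sum.insert) (auto simp: S2_def)
  have sumS2_12: "(\<Sum>t\<in>S2. f1 t * f2 t) = T12 - 1"
    unfolding T12_def SS using one1 one2 by (subst sum.insert) (auto simp: S2_def)
  have sum_eq: "(\<Sum>t\<in>S2. f1 t * (T2 - 1 - f2 t)) = (T2 - 1) * (T1 - 1) - (T12 - 1)"
  proof -
    have "(\<Sum>t\<in>S2. f1 t * (T2 - 1 - f2 t)) = (\<Sum>t\<in>S2. (T2-1) * f1 t - f1 t * f2 t)"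
      by (intro sum.cong) (auto simp: algebra_simps)
    also have "\<dots> = (T2-1) * (\<Sum>t\<in>S2. f1 t) - (\<Sum>t\<in>S2. f1 t * f2 t)"
      by (simp add: sum_subtractf sum_distrib_left)
    finally show ?thesis using sumS2_1 sumS2_12 by simp
  qed
  have fin: "(\<Sum>s\<in>S2. f1 s * f2 (1-s)) * cnj (\<Sum>s\<in>S2. f1 s * f2 (1-s))
      = (of_nat (card (UNIV::'a set)) - 2) + ((T2 - 1) * (T1 - 1) - (T12 - 1))"
  proof -
    have "(\<Sum>s\<in>S2. f1 s * f2 (1-s)) * cnj (\<Sum>s\<in>S2. f1 s * f2 (1-s))
      = (\<Sum>y\<in>S2. \<Sum>x\<in>S2. f1 (x/y) * f2 ((1-x)/(1-y)))" by (rule step1)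
    also have "\<dots> = (\<Sum>y\<in>S2. \<Sum>t\<in>{t. t \<in> S \<and> t*y \<noteq> 1}. f1 t * f2 ((1-t*y)/(1-y)))"
      by (rule sum.cong[OF refl], rule step2)
    also have "\<dots> = (\<Sum>t\<in>S. \<Sum>y\<in>{y. y \<in> S2 \<and> t*y \<noteq> 1}. f1 t * f2 ((1-t*y)/(1-y)))"
      by (rule step3)
    also have "\<dots> = (of_nat (card (UNIV::'a set)) - 2) + (\<Sum>t\<in>S2. f1 t * (T2 - 1 - f2 t))"
      by (rule step4)
    finally show ?thesis unfolding sum_eq .
  qed
  from fin show ?thesis unfolding S2_def S_def T1_def T2_def T12_def by (simp add: algebra_simps)
qed


context fgen
begin


lemma N_pos: "(card (UNIV::'a set) - 1) > 0" using card_gt by simp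

lemma g_nz: "g \<noteq> 0"
proof
  assume g0: "g = 0"
  have "g ^ (card (UNIV::'a set) - 1) = 1" using gord by simp
  moreover have "(0::'a) ^ (card (UNIV::'a set) - 1) = 0" using N_pos by (simp add: zero_power)
  ultimately show False using g0 by simp
qed

lemma gen_eq: "w \<noteq> 0 \<Longrightarrow> g ^ L w = w"
  using gen[of w] by simp

lemma g_pow_eq: "g ^ i = g ^ j \<longleftrightarrow> i mod (card (UNIV::'a set) - 1) = j mod (card (UNIV::'a set) - 1)"
proof -
  have key: "g ^ i = g ^ j \<longleftrightarrow> (card (UNIV::'a set) - 1) dvd (j - i)" if "i \<le> j" for i j
  proof -
    have "g ^ j = g ^ i * g ^ (j - i)" using that by (metis le_add_diff_inverse power_add)
    moreover have "g ^ i \<noteq> 0" using g_nz by simp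
    ultimately have "g ^ i = g ^ j \<longleftrightarrow> g ^ (j - i) = 1" using g_nz by simp
    then show ?thesis using gord by simp
  qed
  show ?thesis
  proof (cases "i \<le> j")
    case True then show ?thesis using key[OF True] mod_eq_dvd_iff_nat[OF True, of "card (UNIV::'a set) - 1"] by metis
  next
    case False then have ji: "j \<le> i" by simp
    show ?thesis using key[OF ji] mod_eq_dvd_iff_nat[OF ji, of "card (UNIV::'a set) - 1"] by metis
  qed
qed

definition om :: complex where "om = cis (2 * pi / real (card (UNIV::'a set) - 1))"
definition chi :: "'a \<Rightarrow> complex" where "chi w = om ^ L w"

lemma om_pow: "om ^ j = cis (real j * (2 * pi / real (card (UNIV::'a set) - 1)))"
  by (simp add: om_def DeMoivre)

lemma om_pow_eq_1: "om ^ j = 1 \<longleftrightarrow> (card (UNIV::'a set) - 1) dvd j"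
proof
  assume "om ^ j = 1"
  then have "Re (om ^ j) = 1" by simp
  then have "cos (real j * (2 * pi / real (card (UNIV::'a set) - 1))) = 1" unfolding om_pow by simp
  then obtain n :: int where n: "real j * (2 * pi / real (card (UNIV::'a set) - 1)) = of_int n * 2 * pi"
    using cos_one_2pi_int by blast
  have NR: "real (card (UNIV::'a set) - 1) > 0" using N_pos by simp
  have "real j = (real j * (2 * pi / real (card (UNIV::'a set) - 1))) * (real (card (UNIV::'a set) - 1) / (2 * pi))"
    using NR by simp
  also have "\<dots> = of_int n * 2 * pi * (real (card (UNIV::'a set) - 1) / (2 * pi))" unfolding n ..
  also have "\<dots> = of_int n * real (card (UNIV::'a set) - 1)" by simp
  finally have "real j = of_int n * real (card (UNIV::'a set) - 1)" .
  then have "real_of_int (int j) = real_of_int (n * int (card (UNIV::'a set) - 1))" by simp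
  then have "int j = n * int (card (UNIV::'a set) - 1)" by (simp only: of_int_eq_iff)
  then have "int (card (UNIV::'a set) - 1) dvd int j" by simp
  then show "(card (UNIV::'a set) - 1) dvd j" by simp
next
  assume "(card (UNIV::'a set) - 1) dvd j"
  then obtain c where c: "j = (card (UNIV::'a set) - 1) * c" by blast
  have "om ^ (card (UNIV::'a set) - 1) = 1" unfolding om_pow using N_pos by simp
  then show "om ^ j = 1" unfolding c by (simp add: power_mult)
qed

lemma om_mod: "om ^ i = om ^ (i mod (card (UNIV::'a set) - 1))"
proof -
  have "om ^ i = om ^ ((card (UNIV::'a set) - 1) * (i div (card (UNIV::'a set) - 1)) + i mod (card (UNIV::'a set) - 1))" by simp
  also have "\<dots> = (om ^ (card (UNIV::'a set) - 1)) ^ (i div (card (UNIV::'a set) - 1)) * om ^ (i mod (card (UNIV::'a set) - 1))" by (simp only: power_add power_mult)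
  also have "\<dots> = om ^ (i mod (card (UNIV::'a set) - 1))" using om_pow_eq_1[of "card (UNIV::'a set) - 1"] by simp
  finally show ?thesis .
qed

lemma chi_mult: "x \<noteq> 0 \<Longrightarrow> y \<noteq> 0 \<Longrightarrow> chi (x*y) = chi x * chi y"
proof -
  assume x: "x \<noteq> 0" and y: "y \<noteq> 0"
  have xy: "x * y \<noteq> 0" using x y by simp
  have "g ^ L (x*y) = g ^ (L x + L y)"
    by (simp add: gen_eq x y xy power_add)
  then have "L (x*y) mod (card (UNIV::'a set) - 1) = (L x + L y) mod (card (UNIV::'a set) - 1)" by (simp add: g_pow_eq)
  then have "om ^ L (x*y) = om ^ (L x + L y)" by (metis om_mod)
  then show ?thesis unfolding chi_def by (simp add: power_add)
qed

lemma chi_pow_eq_1: "x \<noteq> 0 \<Longrightarrow> chi x ^ j = 1 \<longleftrightarrow> x ^ j = 1"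
proof -
  assume x: "x \<noteq> 0"
  have "chi x ^ j = om ^ (L x * j)" unfolding chi_def by (simp add: power_mult)
  moreover have "x ^ j = g ^ (L x * j)" by (simp add: power_mult gen_eq x)
  ultimately show ?thesis using om_pow_eq_1 gord by simp
qed

lemma norm_chi: "norm (chi x) = 1"
  unfolding chi_def om_def by (simp add: norm_power)

lemma chi_unit: "chi x ^ a * cnj (chi x ^ a) = 1"
proof -
  have "of_real ((norm (chi x ^ a))\<^sup>2) = chi x ^ a * cnj (chi x ^ a)" by (rule complex_norm_square)
  moreover have "norm (chi x ^ a) = 1" by (simp add: norm_power norm_chi)
  ultimately show ?thesis by simp
qed

lemma chi_unit2: "chi x ^ a * cnj (chi x) ^ a = 1"
  using chi_unit[of x a] by simp

lemma chi_pow_mult: "x \<noteq> 0 \<Longrightarrow> y \<noteq> 0 \<Longrightarrow> chi (x*y) ^ a = chi x ^ a * chi y ^ a"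
  by (simp add: chi_mult power_mult_distrib)

lemma fermat_dvd: "(w::'a) \<noteq> 0 \<Longrightarrow> (card (UNIV::'a set) - 1) dvd a \<Longrightarrow> w ^ a = 1"
proof -
  assume w: "w \<noteq> 0" and "(card (UNIV::'a set) - 1) dvd a"
  then obtain c where "a = (card (UNIV::'a set) - 1) * c" by blast
  then show ?thesis using fermat[OF w] by (simp add: power_mult)
qed

lemma T_eq: "(\<Sum>w\<in>UNIV-{0}. chi w ^ a) = (if (card (UNIV::'a set) - 1) dvd a then of_nat (card (UNIV::'a set) - 1) else 0)"
proof (cases "(card (UNIV::'a set) - 1) dvd a")
  case True
  have "chi w ^ a = 1" if "w \<in> UNIV-{0}" for w
    using that chi_pow_eq_1 fermat_dvd True by auto
  then have "(\<Sum>w\<in>UNIV-{0}. chi w ^ a) = (\<Sum>w\<in>UNIV-{0::'a}. (1::complex))" by (intro sum.cong) auto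
  also have "\<dots> = of_nat (card (UNIV::'a set) - 1)" by (simp add: card_Diff_singleton)
  finally show ?thesis using True by simp
next
  case False
  then have "g ^ a \<noteq> 1" using gord by simp
  then have ne: "chi g ^ a \<noteq> 1" using chi_pow_eq_1 g_nz by simp
  have bij: "bij_betw (\<lambda>w. g*w) (UNIV-{0}) (UNIV-{0})"
    by (rule bij_betwI[where g="\<lambda>y. y/g"]) (use g_nz in auto)
  have "(\<Sum>w\<in>UNIV-{0}. chi w ^ a) = (\<Sum>w\<in>UNIV-{0}. chi (g*w) ^ a)"
    using sum.reindex_bij_betw[OF bij, of "\<lambda>w. chi w ^ a"] by simp
  also have "\<dots> = (\<Sum>w\<in>UNIV-{0}. chi g ^ a * chi w ^ a)"
    using chi_pow_mult g_nz by (intro sum.cong) auto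
  also have "\<dots> = chi g ^ a * (\<Sum>w\<in>UNIV-{0}. chi w ^ a)" by (simp add: sum_distrib_left)
  finally have "(1 - chi g ^ a) * (\<Sum>w\<in>UNIV-{0}. chi w ^ a) = 0" by (simp add: algebra_simps)
  then show ?thesis using ne False by simp
qed

definition J :: "nat \<Rightarrow> nat \<Rightarrow> complex" where
  "J a b = (\<Sum>s\<in>UNIV-{0,1}. chi s ^ a * chi (1-s) ^ b)"

lemma J_sq: "J a b * cnj (J a b) = of_nat (card (UNIV::'a set)) - 1
   + ((\<Sum>z\<in>UNIV-{0}. chi z ^ b) - 1) * ((\<Sum>z\<in>UNIV-{0}. chi z ^ a) - 1) - (\<Sum>z\<in>UNIV-{0}. chi z ^ (a+b))"
proof -
  have e: "chi z ^ a * chi z ^ b = chi z ^ (a+b)" for z by (simp add: power_add)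
  show ?thesis unfolding J_def e[symmetric]
    by (rule jacobi_identity) (auto simp: chi_pow_mult chi_unit2)
qed

lemma QN: "(of_nat (card (UNIV::'a set) - 1) :: complex) = of_nat (card (UNIV::'a set)) - 1"
  using card_gt by (simp add: of_nat_diff)

lemma J_bound:
  assumes "\<not> ((card (UNIV::'a set) - 1) dvd a \<and> (card (UNIV::'a set) - 1) dvd b)"
  shows "norm (J a b) \<le> sqrt (real (card (UNIV::'a set)))"
proof -
  obtain c :: real where c: "c \<ge> 0" "J a b * cnj (J a b) = of_real (real (card (UNIV::'a set)) - c)"
  proof (cases "(card (UNIV::'a set) - 1) dvd a")
    case True
    then have nb: "\<not> (card (UNIV::'a set) - 1) dvd b" using assms by simp
    then have nab: "\<not> (card (UNIV::'a set) - 1) dvd (a+b)" using True by (simp add: dvd_add_right_iff)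
    show ?thesis
      by (rule that[of "real (card (UNIV::'a set) - 1)"]) (use True nb nab in \<open>simp_all add: J_sq T_eq QN algebra_simps\<close>)
  next
    case False
    show ?thesis
    proof (cases "(card (UNIV::'a set) - 1) dvd b")
      case True
      then have nab: "\<not> (card (UNIV::'a set) - 1) dvd (a+b)" using False by (simp add: dvd_add_left_iff)
      show ?thesis
        by (rule that[of "real (card (UNIV::'a set) - 1)"]) (use True False nab in \<open>simp_all add: J_sq T_eq QN algebra_simps\<close>)
    next
      case nb: False
      show ?thesis
      proof (cases "(card (UNIV::'a set) - 1) dvd (a+b)")
        case True
        show ?thesis
          by (rule that[of "real (card (UNIV::'a set) - 1)"]) (use True False nb in \<open>simp_all add: J_sq T_eq QN algebra_simps\<close>)
      next
        case nab: False
        show ?thesis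
          by (rule that[of 0]) (use nab False nb in \<open>simp_all add: J_sq T_eq QN algebra_simps\<close>)
      qed
    qed
  qed
  have "of_real ((norm (J a b))\<^sup>2) = J a b * cnj (J a b)" by (rule complex_norm_square)
  then have "complex_of_real ((norm (J a b))\<^sup>2) = complex_of_real (real (card (UNIV::'a set)) - c)" using c(2) by simp
  then have "(norm (J a b))\<^sup>2 = real (card (UNIV::'a set)) - c" by (simp only: of_real_eq_iff)
  then have "(norm (J a b))\<^sup>2 \<le> real (card (UNIV::'a set))" using c(1) by simp
  then show ?thesis by (rule real_le_rsqrt)
qed

lemma indicator_sum:
  assumes "m dvd (card (UNIV::'a set) - 1)" "m > 0" "w \<noteq> 0"
  shows "(\<Sum>i<m. chi w ^ (((card (UNIV::'a set) - 1) div m) * i)) = (if w ^ ((card (UNIV::'a set) - 1) div m) = 1 then of_nat m else 0)"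
proof -
  define z where "z = chi w ^ ((card (UNIV::'a set) - 1) div m)"
  have zm: "z ^ m = 1"
  proof -
    have "z ^ m = chi w ^ ((card (UNIV::'a set) - 1) div m * m)" unfolding z_def by (simp add: power_mult)
    also have "(card (UNIV::'a set) - 1) div m * m = (card (UNIV::'a set) - 1)" using assms(1) by simp
    finally show ?thesis using chi_pow_eq_1[OF assms(3)] fermat_dvd[OF assms(3)] by simp
  qed
  have iff: "z = 1 \<longleftrightarrow> w ^ ((card (UNIV::'a set) - 1) div m) = 1" unfolding z_def by (rule chi_pow_eq_1[OF assms(3)])
  have "(\<Sum>i<m. chi w ^ (((card (UNIV::'a set) - 1) div m) * i)) = (\<Sum>i<m. z ^ i)" unfolding z_def by (simp add: power_mult)
  also have "\<dots> = (if z = 1 then of_nat m else (1 - z^m)/(1 - z))" by (rule sum_gp_strict)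
  also have "\<dots> = (if w ^ ((card (UNIV::'a set) - 1) div m) = 1 then of_nat m else 0)" using zm iff by simp
  finally show ?thesis .
qed

end


definition Pw :: "nat \<Rightarrow> 'a::field set" where "Pw r = {z ^ r | z. z \<noteq> 0}"

lemma Pw_mem: "(z::'a::field) \<noteq> 0 \<Longrightarrow> z ^ r \<in> Pw r"
  unfolding Pw_def by (rule CollectI, rule exI[of _ z]) simp

lemma Pw_E: "u \<in> Pw r \<Longrightarrow> (\<And>z. z \<noteq> 0 \<Longrightarrow> u = z ^ r \<Longrightarrow> thesis) \<Longrightarrow> thesis"
  unfolding Pw_def by blast

context fgen
begin

lemma pow_trick:
  assumes "D dvd r" "D dvd (card (UNIV::'a set) - 1)" "(z::'a) \<noteq> 0"
  shows "(z ^ r) ^ ((card (UNIV::'a set) - 1) div D) = 1"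
proof -
  have rr: "r * ((card (UNIV::'a set) - 1) div D) = (card (UNIV::'a set) - 1) * (r div D)"
    using div_mult_swap[OF assms(2), of r] div_mult_swap[OF assms(1), of "card (UNIV::'a set) - 1"] by (simp add: mult.commute)
  have "(z ^ r) ^ ((card (UNIV::'a set) - 1) div D) = (z ^ (card (UNIV::'a set) - 1)) ^ (r div D)"
    by (simp only: power_mult[symmetric] rr)
  then show ?thesis using fermat[OF assms(3)] by simp
qed

lemma dvd_L:
  assumes "m dvd (card (UNIV::'a set) - 1)" "m > 0" "(w::'a) \<noteq> 0" "w ^ ((card (UNIV::'a set) - 1) div m) = 1"
  shows "m dvd L w"
proof -
  have "g ^ (L w * ((card (UNIV::'a set) - 1) div m)) = 1" using assms(4) by (simp add: power_mult gen_eq assms(3))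
  then have d: "(card (UNIV::'a set) - 1) dvd L w * ((card (UNIV::'a set) - 1) div m)" using gord by simp
  have em: "((card (UNIV::'a set) - 1) div m) * m = (card (UNIV::'a set) - 1)" using assms(1) by simp
  have pos: "(card (UNIV::'a set) - 1) div m > 0" by (rule ccontr) (use em N_pos in simp)
  have "m * ((card (UNIV::'a set) - 1) div m) dvd L w * ((card (UNIV::'a set) - 1) div m)" using d assms(1) by simp
  then show ?thesis using pos by simp
qed

lemma Pw_iff:
  assumes "r > 0"
  shows "(w::'a) \<in> Pw r \<longleftrightarrow> w \<noteq> 0 \<and> w ^ ((card (UNIV::'a set) - 1) div gcd r (card (UNIV::'a set) - 1)) = 1"
proof
  assume "w \<in> Pw r"
  then obtain z where z: "z \<noteq> 0" "w = z ^ r" by (rule Pw_E)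
  then show "w \<noteq> 0 \<and> w ^ ((card (UNIV::'a set) - 1) div gcd r (card (UNIV::'a set) - 1)) = 1" using pow_trick[of "gcd r (card (UNIV::'a set) - 1)" r z] by simp
next
  assume w: "w \<noteq> 0 \<and> w ^ ((card (UNIV::'a set) - 1) div gcd r (card (UNIV::'a set) - 1)) = 1"
  let ?m = "gcd r (card (UNIV::'a set) - 1)"
  have m0: "?m > 0" using assms by simp
  have "?m dvd L w" using dvd_L[of ?m w] w m0 by simp
  then obtain l where l: "L w = ?m * l" by blast
  obtain x y where xy: "r * x = (card (UNIV::'a set) - 1) * y + ?m" using bezout_nat[of r "card (UNIV::'a set) - 1"] assms by auto
  have "(g ^ (x * l)) ^ r = g ^ ((card (UNIV::'a set) - 1) * (y * l) + L w)"
  proof -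
    have "(g ^ (x * l)) ^ r = g ^ ((r * x) * l)" by (simp add: power_mult[symmetric] mult_ac)
    also have "(r * x) * l = (card (UNIV::'a set) - 1) * (y * l) + L w" unfolding xy l by (simp add: algebra_simps)
    finally show ?thesis .
  qed
  also have "\<dots> = g ^ L w" by (simp add: g_pow_eq)
  also have "\<dots> = w" using gen_eq[of w] w by simp
  finally have "(g ^ (x * l)) ^ r = w" .
  then show "w \<in> Pw r" using Pw_mem[of "g ^ (x * l)" r] g_nz by simp
qed

lemma Pw_prod_iff:
  assumes r1: "r1 > 0" and r2: "r2 > 0" and c: "(c::'a) \<noteq> 0"
  shows "(\<exists>u\<in>Pw r1. \<exists>v\<in>Pw r2. c * v = u) \<longleftrightarrow> c ^ ((card (UNIV::'a set) - 1) div gcd (gcd r1 r2) (card (UNIV::'a set) - 1)) = 1"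
proof
  let ?D = "gcd (gcd r1 r2) (card (UNIV::'a set) - 1)"
  assume "\<exists>u\<in>Pw r1. \<exists>v\<in>Pw r2. c * v = u"
  then obtain u v where uv: "u \<in> Pw r1" "v \<in> Pw r2" "c * v = u" by blast
  obtain z1 where z1: "z1 \<noteq> 0" "u = z1 ^ r1" by (rule Pw_E[OF uv(1)])
  obtain z2 where z2: "z2 \<noteq> 0" "v = z2 ^ r2" by (rule Pw_E[OF uv(2)])
  have z: "z1 \<noteq> 0" "z2 \<noteq> 0" "c * z2 ^ r2 = z1 ^ r1" using z1 z2 uv(3) by auto
  have D0': "?D dvd gcd r1 r2" by (rule gcd_dvd1)
  have D1: "?D dvd r1" "?D dvd r2" "?D dvd (card (UNIV::'a set) - 1)"
    using dvd_trans[OF D0' gcd_dvd1[of r1 r2]] dvd_trans[OF D0' gcd_dvd2[of r1 r2]] gcd_dvd2[of "gcd r1 r2" "card (UNIV::'a set) - 1"]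
    by auto
  have e1: "(z1 ^ r1) ^ ((card (UNIV::'a set) - 1) div ?D) = 1" by (rule pow_trick[OF D1(1) D1(3) z(1)])
  have e2: "(z2 ^ r2) ^ ((card (UNIV::'a set) - 1) div ?D) = 1" by (rule pow_trick[OF D1(2) D1(3) z(2)])
  have "c ^ ((card (UNIV::'a set) - 1) div ?D) * (z2 ^ r2) ^ ((card (UNIV::'a set) - 1) div ?D) = (z1 ^ r1) ^ ((card (UNIV::'a set) - 1) div ?D)"
  proof -
    have "(c * z2 ^ r2) ^ ((card (UNIV::'a set) - 1) div ?D) = (z1 ^ r1) ^ ((card (UNIV::'a set) - 1) div ?D)"
      using z(3) by simp
    then show ?thesis by (simp only: power_mult_distrib)
  qed
  then show "c ^ ((card (UNIV::'a set) - 1) div ?D) = 1" using e1 e2 by simp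
next
  assume cD0: "c ^ ((card (UNIV::'a set) - 1) div gcd (gcd r1 r2) (card (UNIV::'a set) - 1)) = 1"
  define G where "G = gcd r1 r2"
  define D where "D = gcd G (card (UNIV::'a set) - 1)"
  have cD: "c ^ ((card (UNIV::'a set) - 1) div D) = 1" using cD0 unfolding D_def G_def .
  have G0: "G > 0" using r1 unfolding G_def by simp
  have D0: "D > 0" using G0 unfolding D_def by simp
  have DN: "D dvd (card (UNIV::'a set) - 1)" unfolding D_def by (rule gcd_dvd2)
  have "D dvd L c" by (rule dvd_L[OF DN D0 c cD])
  then obtain l where l: "L c = D * l" by blast
  have r1': "r1 \<noteq> 0" using r1 by simp
  obtain x y where xy: "r1 * x = r2 * y + G" using bezout_nat[OF r1', of r2] unfolding G_def by blast
  have G0': "G \<noteq> 0" using G0 by simp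
  obtain x' y' where xy': "G * x' = (card (UNIV::'a set) - 1) * y' + D" using bezout_nat[OF G0', of "card (UNIV::'a set) - 1"] unfolding D_def by blast
  have ex: "r1 * (x * x' * l) = (L c + r2 * (y * x' * l)) + (card (UNIV::'a set) - 1) * (y' * l)"
  proof -
    have "r1 * (x * x' * l) = (r1 * x) * x' * l" by (simp add: mult_ac)
    also have "\<dots> = (r2 * y + G) * x' * l" unfolding xy ..
    also have "\<dots> = r2 * (y * x' * l) + (G * x') * l" by (simp add: algebra_simps)
    also have "\<dots> = r2 * (y * x' * l) + ((card (UNIV::'a set) - 1) * y' + D) * l" unfolding xy' ..
    also have "\<dots> = (L c + r2 * (y * x' * l)) + (card (UNIV::'a set) - 1) * (y' * l)" unfolding l by (simp add: algebra_simps)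
    finally show ?thesis .
  qed
  have "(g ^ (x * x' * l)) ^ r1 = g ^ (L c + r2 * (y * x' * l))"
  proof -
    have "(g ^ (x * x' * l)) ^ r1 = g ^ (r1 * (x * x' * l))" by (simp add: power_mult[symmetric] mult_ac)
    also have "\<dots> = g ^ (L c + r2 * (y * x' * l))" unfolding ex by (simp add: g_pow_eq)
    finally show ?thesis .
  qed
  also have "\<dots> = c * (g ^ (y * x' * l)) ^ r2"
  proof -
    have a1: "(g ^ (y * x' * l)) ^ r2 = g ^ ((y * x' * l) * r2)" by (rule power_mult[symmetric])
    have a2: "(y * x' * l) * r2 = r2 * (y * x' * l)" by (rule mult.commute)
    have "g ^ (L c + r2 * (y * x' * l)) = g ^ L c * g ^ (r2 * (y * x' * l))" by (rule power_add)
    also have "\<dots> = c * (g ^ (y * x' * l)) ^ r2" unfolding a1 a2 gen_eq[OF c] ..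
    finally show ?thesis .
  qed
  finally have eq: "c * (g ^ (y * x' * l)) ^ r2 = (g ^ (x * x' * l)) ^ r1" by simp
  have u: "(g ^ (x * x' * l)) ^ r1 \<in> Pw r1" by (rule Pw_mem) (simp add: g_nz)
  have v: "(g ^ (y * x' * l)) ^ r2 \<in> Pw r2" by (rule Pw_mem) (simp add: g_nz)
  show "\<exists>u\<in>Pw r1. \<exists>v\<in>Pw r2. c * v = u" using eq u v by blast
qed

lemma count_exists:
  assumes r1: "r1 > 0" and r2: "r2 > 0" and A: "(A::'a) \<noteq> 0" and B: "(B::'a) \<noteq> 0"
    and ineq: "(real (gcd r1 (card (UNIV::'a set) - 1) * gcd r2 (card (UNIV::'a set) - 1)) - 1) * sqrt (real (card (UNIV::'a set))) < real (card (UNIV::'a set)) - 2"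
  shows "\<exists>s. s \<noteq> 0 \<and> s \<noteq> 1 \<and> A * s \<in> Pw r1 \<and> B * (1 - s) \<in> Pw r2"
proof (rule ccontr)
  assume H: "\<not> ?thesis"
  define m1 where "m1 = gcd r1 (card (UNIV::'a set) - 1)"
  define m2 where "m2 = gcd r2 (card (UNIV::'a set) - 1)"
  define e1 where "e1 = (card (UNIV::'a set) - 1) div m1"
  define e2 where "e2 = (card (UNIV::'a set) - 1) div m2"
  define S2 where "S2 = (UNIV - {0,1} :: 'a set)"
  define Q where "Q = card (UNIV::'a set)"
  have m1p: "m1 > 0" "m1 dvd (card (UNIV::'a set) - 1)" using r1 by (auto simp: m1_def)
  have m2p: "m2 > 0" "m2 dvd (card (UNIV::'a set) - 1)" using r2 by (auto simp: m2_def)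
  define I1 where "I1 w = (\<Sum>i<m1. chi w ^ (e1 * i))" for w
  define I2 where "I2 w = (\<Sum>j<m2. chi w ^ (e2 * j))" for w
  have zero: "I1 (A * s) * I2 (B * (1 - s)) = 0" if s: "s \<in> S2" for s
  proof -
    have s0: "s \<noteq> 0" "s \<noteq> 1" using s by (auto simp: S2_def)
    have nz: "A * s \<noteq> 0" "B * (1 - s) \<noteq> 0" using s0 A B by auto
    have i1: "I1 (A * s) = (if A * s \<in> Pw r1 then of_nat m1 else 0)"
      unfolding I1_def e1_def using indicator_sum[OF m1p(2) m1p(1) nz(1)] Pw_iff[OF r1] nz(1)
      by (simp add: m1_def)
    have i2: "I2 (B * (1 - s)) = (if B * (1 - s) \<in> Pw r2 then of_nat m2 else 0)"
      unfolding I2_def e2_def using indicator_sum[OF m2p(2) m2p(1) nz(2)] Pw_iff[OF r2] nz(2)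
      by (simp add: m2_def)
    show ?thesis using H s0 unfolding i1 i2 by auto
  qed
  define c where "c i j = chi A ^ (e1 * i) * chi B ^ (e2 * j)" for i j
  define f where "f p = c (fst p) (snd p) * J (e1 * fst p) (e2 * snd p)" for p
  have expand: "(\<Sum>s\<in>S2. I1 (A * s) * I2 (B * (1 - s))) = (\<Sum>i<m1. \<Sum>j<m2. c i j * J (e1 * i) (e2 * j))"
  proof -
    have "(\<Sum>s\<in>S2. I1 (A * s) * I2 (B * (1 - s)))
        = (\<Sum>s\<in>S2. \<Sum>i<m1. \<Sum>j<m2. c i j * (chi s ^ (e1 * i) * chi (1 - s) ^ (e2 * j)))"
    proof (rule sum.cong[OF refl])
      fix s assume s: "s \<in> S2"
      have s0: "s \<noteq> 0" "1 - s \<noteq> 0" using s by (auto simp: S2_def)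
      have "I1 (A * s) * I2 (B * (1 - s))
          = (\<Sum>i<m1. chi A ^ (e1 * i) * chi s ^ (e1 * i)) * (\<Sum>j<m2. chi B ^ (e2 * j) * chi (1 - s) ^ (e2 * j))"
        unfolding I1_def I2_def using s0 A B by (simp add: chi_pow_mult)
      also have "\<dots> = (\<Sum>i<m1. \<Sum>j<m2. (chi A ^ (e1 * i) * chi s ^ (e1 * i)) * (chi B ^ (e2 * j) * chi (1 - s) ^ (e2 * j)))"
        by (rule sum_product)
      also have "\<dots> = (\<Sum>i<m1. \<Sum>j<m2. c i j * (chi s ^ (e1 * i) * chi (1 - s) ^ (e2 * j)))"
        unfolding c_def by (simp add: mult_ac)
      finally show "I1 (A * s) * I2 (B * (1 - s)) = (\<Sum>i<m1. \<Sum>j<m2. c i j * (chi s ^ (e1 * i) * chi (1 - s) ^ (e2 * j)))" .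
    qed
    also have "\<dots> = (\<Sum>i<m1. \<Sum>s\<in>S2. \<Sum>j<m2. c i j * (chi s ^ (e1 * i) * chi (1 - s) ^ (e2 * j)))"
      by (rule sum.swap)
    also have "\<dots> = (\<Sum>i<m1. \<Sum>j<m2. \<Sum>s\<in>S2. c i j * (chi s ^ (e1 * i) * chi (1 - s) ^ (e2 * j)))"
      by (rule sum.cong[OF refl], rule sum.swap)
    also have "\<dots> = (\<Sum>i<m1. \<Sum>j<m2. c i j * J (e1 * i) (e2 * j))"
      unfolding J_def S2_def by (simp add: sum_distrib_left)
    finally show ?thesis .
  qed
  have tot: "(\<Sum>p\<in>{..<m1} \<times> {..<m2}. f p) = 0"
  proof -
    have "(\<Sum>p\<in>{..<m1} \<times> {..<m2}. f p) = (\<Sum>i<m1. \<Sum>j<m2. c i j * J (e1 * i) (e2 * j))"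
      unfolding f_def by (simp add: sum.cartesian_product case_prod_unfold)
    also have "\<dots> = 0" unfolding expand[symmetric] by (rule sum.neutral) (use zero in auto)
    finally show ?thesis .
  qed
  have mem: "(0,0) \<in> {..<m1} \<times> {..<m2}" using m1p m2p by simp
  have f00: "f (0,0) = of_nat Q - 2"
  proof -
    have "J 0 0 = of_nat (card S2)" unfolding J_def S2_def by simp
    also have "card S2 = Q - 2" unfolding S2_def Q_def by (subst card_Diff_subset) auto
    also have "of_nat (Q - 2) = (of_nat Q - 2 :: complex)"
      using card_two_le[where 'a='a] by (simp add: of_nat_diff Q_def)
    finally show ?thesis unfolding f_def c_def by simp
  qed
  have split: "f (0,0) + (\<Sum>p\<in>{..<m1} \<times> {..<m2} - {(0,0)}. f p) = 0"
    using tot sum.remove[OF _ mem, of f] by simp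
  have bound: "norm (f p) \<le> sqrt (real Q)" if p: "p \<in> {..<m1} \<times> {..<m2} - {(0,0)}" for p
  proof -
    obtain i j where pij: "p = (i,j)" by (cases p)
    have ij: "p = (i,j)" "i < m1" "j < m2" "(i,j) \<noteq> (0,0)" using p pij by auto
    have nd: "\<not> ((card (UNIV::'a set) - 1) dvd e1 * i \<and> (card (UNIV::'a set) - 1) dvd e2 * j)"
    proof
      assume dd: "(card (UNIV::'a set) - 1) dvd e1 * i \<and> (card (UNIV::'a set) - 1) dvd e2 * j"
      show False
      proof (cases "i = 0")
        case False
        have em: "e1 * m1 = (card (UNIV::'a set) - 1)" using m1p unfolding e1_def by simp
        have ep: "e1 > 0" by (rule ccontr) (use em N_pos in simp)
        have "e1 * i < e1 * m1" using ij(2) ep by simp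
        also note em
        finally have "e1 * i < (card (UNIV::'a set) - 1)" .
        moreover have "e1 * i > 0" using False ep by simp
        ultimately show False using dd by (meson nat_dvd_not_less)
      next
        case True
        then have j0: "j \<noteq> 0" using ij(4) by simp
        have em: "e2 * m2 = (card (UNIV::'a set) - 1)" using m2p unfolding e2_def by simp
        have ep: "e2 > 0" by (rule ccontr) (use em N_pos in simp)
        have "e2 * j < e2 * m2" using ij(3) ep by simp
        also note em
        finally have "e2 * j < (card (UNIV::'a set) - 1)" .
        moreover have "e2 * j > 0" using j0 ep by simp
        ultimately show False using dd by (meson nat_dvd_not_less)
      qed
    qed
    have "norm (c i j) = 1" unfolding c_def by (simp add: norm_mult norm_power norm_chi)
    then have "norm (f p) = norm (J (e1 * i) (e2 * j))" unfolding f_def ij(1) by (simp add: norm_mult)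
    also have "\<dots> \<le> sqrt (real Q)" unfolding Q_def by (rule J_bound[OF nd])
    finally show ?thesis .
  qed
  have "f (0,0) = - (\<Sum>p\<in>{..<m1} \<times> {..<m2} - {(0,0)}. f p)"
    using split by (simp add: eq_neg_iff_add_eq_0)
  then have "norm (f (0,0)) = norm (\<Sum>p\<in>{..<m1} \<times> {..<m2} - {(0,0)}. f p)" by simp
  also have "\<dots> \<le> (\<Sum>p\<in>{..<m1} \<times> {..<m2} - {(0,0)}. sqrt (real Q))"
    by (rule sum_norm_le) (rule bound)
  also have "\<dots> = real (m1 * m2 - 1) * sqrt (real Q)"
    using mem by (simp add: card_Diff_singleton card_cartesian_product)
  finally have le: "norm (f (0,0)) \<le> real (m1 * m2 - 1) * sqrt (real Q)" .
  have "norm (f (0,0)) = real Q - 2"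
  proof -
    have "complex_of_real (real Q - 2) = f (0,0)" unfolding f00 by simp
    moreover have "real Q \<ge> 2" using card_two_le[where 'a='a] by (simp add: Q_def)
    ultimately show ?thesis by (metis abs_of_nonneg diff_ge_0_iff_ge norm_of_real)
  qed
  moreover have "real (m1 * m2 - 1) = real (m1 * m2) - 1" using m1p m2p by (simp add: of_nat_diff)
  ultimately show False using le ineq unfolding m1_def m2_def Q_def by simp
qed

end


lemma proj_sub:
  fixes x1 y1 x2 y2 :: "'a::field"
  assumes x2: "x2 \<noteq> 0" and e: "x1 * y2 = x2 * y1"
  shows "proj_pt x1 y1 \<subseteq> proj_pt x2 y2"
proof
  fix p assume "p \<in> proj_pt x1 y1"
  then obtain c where p: "p = (c*x1, c*y1)" unfolding proj_pt_def by auto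
  have "(c*x1/x2)*y2 = c*(x1*y2)/x2" by simp
  also have "\<dots> = c*(x2*y1)/x2" using e by simp
  also have "\<dots> = c*y1" using x2 by simp
  finally have a: "(c*x1/x2)*y2 = c*y1" .
  have b: "(c*x1/x2)*x2 = c*x1" using x2 by simp
  show "p \<in> proj_pt x2 y2" unfolding proj_pt_def p using a b by (auto intro!: exI[of _ "c*x1/x2"])
qed

lemma proj_pt_eq:
  fixes x1 y1 x2 y2 :: "'a::field"
  assumes "x1 \<noteq> 0" "x2 \<noteq> 0"
  shows "proj_pt x1 y1 = proj_pt x2 y2 \<longleftrightarrow> x1 * y2 = x2 * y1"
proof
  assume eq: "proj_pt x1 y1 = proj_pt x2 y2"
  have "(x1, y1) \<in> proj_pt x1 y1" unfolding proj_pt_def by (auto intro!: exI[of _ 1])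
  then have "(x1, y1) \<in> proj_pt x2 y2" using eq by simp
  then obtain c where "(x1, y1) = (c*x2, c*y2)" unfolding proj_pt_def by blast
  then have "x1 = c*x2" "y1 = c*y2" by simp_all
  then show "x1*y2 = x2*y1" by simp
next
  assume e: "x1 * y2 = x2 * y1"
  show "proj_pt x1 y1 = proj_pt x2 y2"
  proof -
    have e': "x2 * y1 = x1 * y2" using e by simp
    show ?thesis by (rule subset_antisym[OF proj_sub[OF assms(2) e] proj_sub[OF assms(1) e']])
  qed
qed

lemma inter_iff:
  fixes G F :: "'a::field \<Rightarrow> 'a"
  shows "L_graph G \<inter> L_twisted q h F \<noteq> {} \<longleftrightarrow> (\<exists>x y. x \<noteq> 0 \<and> y \<noteq> 0 \<and> x * F y = y^(q^h) * G x)"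
proof -
  have "L_graph G \<inter> L_twisted q h F \<noteq> {} \<longleftrightarrow>
      (\<exists>x y. x \<noteq> 0 \<and> y \<noteq> 0 \<and> proj_pt x (G x) = proj_pt (y^(q^h)) (F y))"
    unfolding L_graph_def L_twisted_def by blast
  also have "\<dots> \<longleftrightarrow> (\<exists>x y. x \<noteq> 0 \<and> y \<noteq> 0 \<and> x * F y = y^(q^h) * G x)"
  proof -
    have pe: "proj_pt x (G x) = proj_pt (y^(q^h)) (F y) \<longleftrightarrow> x * F y = y^(q^h) * G x"
      if "x \<noteq> 0" "y \<noteq> 0" for x y
      using proj_pt_eq[of x "y^(q^h)" "G x" "F y"] that by simp
    show ?thesis using pe by blast
  qed
  finally show ?thesis .
qed

lemma frob_inv:
  fixes z :: "'a::{finite,field}"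
  assumes "card (UNIV::'a set) = q ^ n" "h \<le> n"
  shows "(z ^ (q^(n-h))) ^ (q^h) = z"
proof -
  have "q^(n-h) * q^h = q^n" using assms(2) by (simp add: power_add[symmetric])
  then have "(z ^ (q^(n-h))) ^ (q^h) = z ^ card (UNIV::'a set)" using assms(1) by (simp add: power_mult[symmetric])
  then show ?thesis by (simp add: pow_card_id)
qed

lemma pow_split: "1 \<le> (Q::nat) \<Longrightarrow> (z::'a::field) ^ Q = z * z ^ (Q - 1)"
  by (metis One_nat_def Suc_diff_le diff_Suc_1 power_Suc)

lemma R_iff:
  fixes a lam :: "'a::{finite,field}"
  assumes card: "card (UNIV::'a set) = q ^ n" and q: "q \<ge> 1" and a: "a \<noteq> 0"
    and dn: "d < n" and hn: "h < n" and hd: "h \<noteq> d"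
    and t: "t = nat \<bar>int d - int h\<bar>"
  shows "(\<exists>y. y \<noteq> 0 \<and> a * y^(q^d) = y^(q^h) * lam) \<longleftrightarrow> lam / a \<in> Pw (q^t - 1)"
proof -
  have qt: "q^t \<ge> 1" using q by simp
  show ?thesis
  proof (cases "h < d")
    case True
    then have td: "d = h + t" using t by auto
    have yd: "y^(q^d) = (y^(q^h))^(q^t)" for y :: 'a
      unfolding td by (simp add: power_add power_mult)
    show ?thesis
    proof
      assume "\<exists>y. y \<noteq> 0 \<and> a * y^(q^d) = y^(q^h) * lam"
      then obtain y where y: "y \<noteq> 0" "a * y^(q^d) = y^(q^h) * lam" by blast
      define z where "z = y^(q^h)"
      have z0: "z \<noteq> 0" using y unfolding z_def by simp
      have "a * (z * z^(q^t - 1)) = z * lam" using y(2) unfolding yd z_def[symmetric] pow_split[OF qt] .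
      then have "lam = a * z^(q^t - 1)" using z0 by (simp add: mult_ac)
      then have "lam / a = z^(q^t - 1)" using a by simp
      then show "lam / a \<in> Pw (q^t - 1)" using Pw_mem[OF z0, of "q^t - 1"] by simp
    next
      assume "lam / a \<in> Pw (q^t - 1)"
      then obtain z where z: "z \<noteq> 0" "lam / a = z^(q^t - 1)" by (rule Pw_E)
      define y where "y = z ^ (q^(n-h))"
      have yz: "y^(q^h) = z" unfolding y_def by (rule frob_inv[OF card]) (use hn in simp)
      have qh: "q^h > 0" using q by simp
      have y0: "y \<noteq> 0"
      proof
        assume "y = 0"
        then have "z = 0" using yz qh by (simp add: zero_power)
        then show False using z by simp
      qed
      have lam: "lam = a * z^(q^t - 1)" using z(2) a by (simp add: field_simps)
      have "a * y^(q^d) = y^(q^h) * lam" unfolding yd yz lam pow_split[OF qt] by (simp add: mult_ac)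
      then show "\<exists>y. y \<noteq> 0 \<and> a * y^(q^d) = y^(q^h) * lam" using y0 by blast
    qed
  next
    case False
    then have dh: "d < h" using hd by simp
    then have th: "h = d + t" using t by auto
    have yh: "y^(q^h) = (y^(q^d))^(q^t)" for y :: 'a
      unfolding th by (simp add: power_add power_mult)
    show ?thesis
    proof
      assume "\<exists>y. y \<noteq> 0 \<and> a * y^(q^d) = y^(q^h) * lam"
      then obtain y where y: "y \<noteq> 0" "a * y^(q^d) = y^(q^h) * lam" by blast
      define w where "w = y^(q^d)"
      have w0: "w \<noteq> 0" using y unfolding w_def by simp
      have "a * w = (w * w^(q^t - 1)) * lam" using y(2) unfolding yh w_def[symmetric] pow_split[OF qt] .
      then have "a = w^(q^t - 1) * lam" using w0 by (simp add: mult_ac)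
      then have "lam / a = (inverse w)^(q^t - 1)" using a w0 by (simp add: field_simps power_inverse)
      then show "lam / a \<in> Pw (q^t - 1)" using Pw_mem[of "inverse w" "q^t - 1"] w0 by simp
    next
      assume "lam / a \<in> Pw (q^t - 1)"
      then obtain z where z: "z \<noteq> 0" "lam / a = z^(q^t - 1)" by (rule Pw_E)
      define w where "w = inverse z"
      have w0: "w \<noteq> 0" using z unfolding w_def by simp
      define y where "y = w ^ (q^(n-d))"
      have yw: "y^(q^d) = w" unfolding y_def by (rule frob_inv[OF card]) (use dn in simp)
      have qd: "q^d > 0" using q by simp
      have y0: "y \<noteq> 0"
      proof
        assume "y = 0"
        then have "w = 0" using yw qd by (simp add: zero_power)
        then show False using w0 by simp
      qed
      have lam: "lam = a * z^(q^t - 1)" using z(2) a by (simp add: field_simps)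
      have wz: "w^(q^t - 1) * z^(q^t - 1) = 1" unfolding w_def using z(1)
        by (simp add: power_mult_distrib[symmetric])
      have "y^(q^h) * lam = w * a * (w^(q^t - 1) * z^(q^t - 1))"
        unfolding yh yw lam pow_split[OF qt] by (simp add: mult_ac)
      also have "\<dots> = a * y^(q^d)" unfolding wz yw by simp
      finally show "\<exists>y. y \<noteq> 0 \<and> a * y^(q^d) = y^(q^h) * lam" using y0 by metis
    qed
  qed
qed

lemma reduce:
  fixes a \<alpha> \<beta> :: "'a::{finite,field}"
  assumes card: "card (UNIV::'a set) = q ^ n" and q: "q \<ge> 1" and a: "a \<noteq> 0"
    and dn: "d < n" and hn: "h < n" and hd: "h \<noteq> d"
    and t: "t = nat \<bar>int d - int h\<bar>"
  shows "(\<exists>x y. x \<noteq> 0 \<and> y \<noteq> 0 \<and> x * (a * y^(q^d)) = y^(q^h) * (\<alpha> * x^(q^k) + \<beta> * x))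
     \<longleftrightarrow> (\<exists>u\<in>Pw (q^k - 1). (\<alpha> * u + \<beta>) / a \<in> Pw (q^t - 1))"
proof -
  have qk: "q^k \<ge> 1" using q by simp
  have eq: "x * (a * y^(q^d)) = y^(q^h) * (\<alpha> * x^(q^k) + \<beta> * x)
        \<longleftrightarrow> a * y^(q^d) = y^(q^h) * (\<alpha> * x^(q^k - 1) + \<beta>)" if x: "x \<noteq> 0" for x y :: 'a
  proof -
    have h1: "\<alpha> * x^(q^k) + \<beta> * x = x * (\<alpha> * x^(q^k - 1) + \<beta>)"
      using pow_split[OF qk, of x] by (simp add: algebra_simps)
    have e2: "y^(q^h) * (\<alpha> * x^(q^k) + \<beta> * x) = x * (y^(q^h) * (\<alpha> * x^(q^k - 1) + \<beta>))"
      unfolding h1 by (simp add: mult_ac)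
    show ?thesis unfolding e2 by (rule mult_left_cancel[OF x])
  qed
  have "(\<exists>x y. x \<noteq> 0 \<and> y \<noteq> 0 \<and> x * (a * y^(q^d)) = y^(q^h) * (\<alpha> * x^(q^k) + \<beta> * x))
      \<longleftrightarrow> (\<exists>x. x \<noteq> 0 \<and> (\<exists>y. y \<noteq> 0 \<and> a * y^(q^d) = y^(q^h) * (\<alpha> * x^(q^k - 1) + \<beta>)))"
    using eq by blast
  also have "\<dots> \<longleftrightarrow> (\<exists>x. x \<noteq> 0 \<and> (\<alpha> * x^(q^k - 1) + \<beta>) / a \<in> Pw (q^t - 1))"
    using R_iff[OF card q a dn hn hd t] by blast
  also have "\<dots> \<longleftrightarrow> (\<exists>u\<in>Pw (q^k - 1). (\<alpha> * u + \<beta>) / a \<in> Pw (q^t - 1))"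
  proof
    assume "\<exists>x. x \<noteq> 0 \<and> (\<alpha> * x^(q^k - 1) + \<beta>) / a \<in> Pw (q^t - 1)"
    then obtain x where x: "x \<noteq> 0" "(\<alpha> * x^(q^k - 1) + \<beta>) / a \<in> Pw (q^t - 1)" by blast
    show "\<exists>u\<in>Pw (q^k - 1). (\<alpha> * u + \<beta>) / a \<in> Pw (q^t - 1)"
      by (rule bexI[of _ "x^(q^k - 1)"]) (use x Pw_mem[OF x(1)] in auto)
  next
    assume "\<exists>u\<in>Pw (q^k - 1). (\<alpha> * u + \<beta>) / a \<in> Pw (q^t - 1)"
    then obtain u where u: "u \<in> Pw (q^k - 1)" "(\<alpha> * u + \<beta>) / a \<in> Pw (q^t - 1)" by blast
    obtain z where z: "z \<noteq> 0" "u = z^(q^k - 1)" by (rule Pw_E[OF u(1)])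
    show "\<exists>x. x \<noteq> 0 \<and> (\<alpha> * x^(q^k - 1) + \<beta>) / a \<in> Pw (q^t - 1)"
      by (rule exI[of _ z]) (use z u in simp)
  qed
  finally show ?thesis .
qed

lemma gcd_pow_minus_one:
  fixes q :: nat
  assumes q: "q \<ge> 1"
  shows "gcd (q^a - 1) (q^b - 1) = q^(gcd a b) - 1"
proof (induction "a + b" arbitrary: a b rule: less_induct)
  case less
  have step: "gcd (q^a - 1) (q^b - 1) = gcd (q^(a-b) - 1) (q^b - 1)" if ba: "b \<le> a" for a b
  proof -
    define XX where "XX = q^(a-b)"
    define YY where "YY = q^b"
    have X1: "XX \<ge> 1" "YY \<ge> 1" using q by (simp_all add: XX_def YY_def)
    have qa: "q^a = XX * YY" unfolding XX_def YY_def using ba by (simp add: power_add[symmetric])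
    have XY: "XX * YY \<ge> XX" using X1 by simp
    have m: "XX * (YY - 1) = XX * YY - XX" by (simp add: diff_mult_distrib2)
    have "q^a - 1 = XX * (YY - 1) + (XX - 1)" unfolding qa m using X1 XY by linarith
    then have "gcd (q^a - 1) (q^b - 1) = gcd (XX * (YY - 1) + (XX - 1)) (YY - 1)" by (simp add: YY_def)
    also have "\<dots> = gcd (YY - 1) (XX * (YY - 1) + (XX - 1))" by (rule gcd.commute)
    also have "\<dots> = gcd (YY - 1) (XX - 1)" by (rule gcd_add_mult)
    also have "\<dots> = gcd (q^(a-b) - 1) (q^b - 1)" by (simp add: XX_def YY_def gcd.commute)
    finally show ?thesis .
  qed
  show ?case
  proof (cases "a = 0 \<or> b = 0")
    case True then show ?thesis by auto
  next
    case False
    show ?thesis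
    proof (cases "b \<le> a")
      case True
      have "gcd (q^a - 1) (q^b - 1) = gcd (q^(a-b) - 1) (q^b - 1)" by (rule step[OF True])
      also have "\<dots> = q^(gcd (a-b) b) - 1" using less False True by simp
      also have "gcd (a-b) b = gcd a b" using True by (simp add: gcd_diff1_nat)
      finally show ?thesis .
    next
      case nt: False
      then have ab: "a \<le> b" by simp
      have "gcd (q^a - 1) (q^b - 1) = gcd (q^(b-a) - 1) (q^a - 1)" using step[OF ab] by (simp add: gcd.commute)
      also have "\<dots> = q^(gcd (b-a) a) - 1" using less False ab by simp
      also have "gcd (b-a) a = gcd a b" using gcd_diff1_nat[OF ab] by (simp add: gcd.commute)
      finally show ?thesis .
    qed
  qed
qed

lemma final_ineq:
  fixes q k t n m1 m2 :: nat
  assumes q: "q \<ge> 2" and k: "k \<ge> 1" and t: "t \<ge> 1" and kt: "2 * (k + t) \<le> n"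
    and m1: "m1 \<le> q^k - 1" and m2: "m2 \<le> q^t - 1"
  shows "(real (m1 * m2) - 1) * sqrt (real (q^n)) < real (q^n) - 2"
proof -
  define s where "s = sqrt (real (q^n))"
  define XX where "XX = real (q^k)"
  define YY where "YY = real (q^t)"
  have hk: "2 \<le> q^k" using self_le_power[of q k] q k by simp
  have "real 2 \<le> real (q^k)" using hk by (simp only: of_nat_le_iff)
  then have X2: "XX \<ge> 2" unfolding XX_def by simp
  have ht: "2 \<le> q^t" using self_le_power[of q t] q t by simp
  have "real 2 \<le> real (q^t)" using ht by (simp only: of_nat_le_iff)
  then have Y2: "YY \<ge> 2" unfolding YY_def by simp
  have s0: "s \<ge> 0" unfolding s_def by simp
  have ss: "s * s = real (q^n)" unfolding s_def by simp
  have H: "(q^(k+t))^2 \<le> q^n"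
  proof -
    have "(q^(k+t))^2 = q^(2*(k+t))" by (simp add: power_mult[symmetric] mult.commute)
    also have "\<dots> \<le> q^n" using q kt by (simp add: power_increasing)
    finally show ?thesis .
  qed
  have "real ((q^(k+t))^2) \<le> real (q^n)" using H by (simp only: of_nat_le_iff)
  then have "(real (q^(k+t)))^2 \<le> real (q^n)" by simp
  then have "real (q^(k+t)) \<le> s" unfolding s_def by (rule real_le_rsqrt)
  then have XYs: "XX * YY \<le> s" unfolding XX_def YY_def by (simp add: power_add)
  have "real m1 \<le> real (q^k - 1)" using m1 by (simp only: of_nat_le_iff)
  also have "real (q^k - 1) = XX - 1" unfolding XX_def using hk by (simp add: of_nat_diff)
  finally have rm1: "real m1 \<le> XX - 1" .
  have "real m2 \<le> real (q^t - 1)" using m2 by (simp only: of_nat_le_iff)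
  also have "real (q^t - 1) = YY - 1" unfolding YY_def using ht by (simp add: of_nat_diff)
  finally have rm2: "real m2 \<le> YY - 1" .
  have "real m1 * real m2 \<le> (XX - 1) * (YY - 1)" by (rule mult_mono) (use rm1 rm2 X2 in auto)
  then have "real (m1 * m2) - 1 \<le> XX * YY - XX - YY" by (simp add: algebra_simps)
  also have "\<dots> \<le> s - 4" using XYs X2 Y2 by linarith
  finally have le: "real (m1 * m2) - 1 \<le> s - 4" .
  have "(real (m1 * m2) - 1) * s \<le> (s - 4) * s" by (rule mult_right_mono[OF le s0])
  also have "\<dots> = real (q^n) - 4 * s" using ss by (simp add: algebra_simps)
  also have "\<dots> < real (q^n) - 2"
  proof -
    have "real (q^n) \<ge> 1" using q by simp
    then have "s \<ge> 1" unfolding s_def by simp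
    then show ?thesis by simp
  qed
  finally show ?thesis unfolding s_def .
qed


hide_const (open) Divisibility.prime

theorem theorem3p9:
  fixes q n k d h p m :: nat
    and \<alpha> \<beta> a\<^sub>d :: "'a::{finite, field}"
  assumes "prime p" and "m \<ge> 1" and "q = p ^ m"
    and "card (UNIV :: 'a set) = q ^ n"
    and "n \<ge> 2"
    and "\<alpha> \<noteq> 0"
    and "1 \<le> k" and "k < n"
    and "a\<^sub>d \<noteq> 0" and "d < n"
    and "h < n" and "h \<noteq> d"
  shows
    "(\<beta> = 0 \<longrightarrow>
       (L_graph (\<lambda>x. \<alpha> * x ^ (q ^ k) + \<beta> * x) \<inter> L_twisted q h (\<lambda>y. a\<^sub>d * y ^ (q ^ d)) \<noteq> {}
        \<longleftrightarrow> rel_norm q n (nat (gcd (int n) (gcd (int k) (int d - int h)))) (a\<^sub>d / \<alpha>) = 1))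
     \<and>
     ((\<beta> \<noteq> 0 \<and> 2 * (k + nat \<bar>int d - int h\<bar>) \<le> n) \<longrightarrow>
       L_graph (\<lambda>x. \<alpha> * x ^ (q ^ k) + \<beta> * x) \<inter> L_twisted q h (\<lambda>y. a\<^sub>d * y ^ (q ^ d)) \<noteq> {})"
proof -
  have p2: "p \<ge> 2" using assms(1) by (rule prime_ge_2_nat)
  have "p \<le> p ^ m" using assms(2) p2 by (simp add: self_le_power)
  then have q2: "q \<ge> 2" using assms(3) p2 by simp
  have q1: "q \<ge> 1" using q2 by simp
  have card: "card (UNIV::'a set) = q ^ n" by (rule assms(4))
  have cg: "card (UNIV::'a set) > 2"
  proof -
    have "q^2 \<le> q^n" using assms(5) q1 by (simp add: power_increasing)
    moreover have "4 \<le> q^2" using q2 by (simp add: power2_eq_square mult_le_mono[of 2 q 2 q, simplified])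
    ultimately show ?thesis using card by simp
  qed
  obtain g :: 'a and L where fg: "fgen g L" using fgen_exists[OF cg] by blast
  interpret fgen g L by (rule fg)
  define t where "t = nat \<bar>int d - int h\<bar>"
  have t1: "t \<ge> 1" using assms(12) unfolding t_def by auto
  define r1 where "r1 = q^k - 1"
  define r2 where "r2 = q^t - 1"
  have qk: "2 \<le> q^k" using self_le_power[of q k] q2 assms(7) by simp
  have qt: "2 \<le> q^t" using self_le_power[of q t] q2 t1 by simp
  have r1p: "r1 > 0" using qk unfolding r1_def by simp
  have r2p: "r2 > 0" using qt unfolding r2_def by simp
  have N: "card (UNIV::'a set) - 1 = q^n - 1" using card by simp
  have LHS_iff: "L_graph (\<lambda>x. \<alpha> * x ^ (q ^ k) + \<beta> * x) \<inter> L_twisted q h (\<lambda>y. a\<^sub>d * y ^ (q ^ d)) \<noteq> {}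
      \<longleftrightarrow> (\<exists>u\<in>Pw r1. (\<alpha> * u + \<beta>) / a\<^sub>d \<in> Pw r2)" for \<beta>
  proof -
    have "L_graph (\<lambda>x. \<alpha> * x ^ (q ^ k) + \<beta> * x) \<inter> L_twisted q h (\<lambda>y. a\<^sub>d * y ^ (q ^ d)) \<noteq> {}
      \<longleftrightarrow> (\<exists>x y. x \<noteq> 0 \<and> y \<noteq> 0 \<and> x * (a\<^sub>d * y^(q^d)) = y^(q^h) * (\<alpha> * x^(q^k) + \<beta> * x))"
      by (rule inter_iff)
    also have "\<dots> \<longleftrightarrow> (\<exists>u\<in>Pw r1. (\<alpha> * u + \<beta>) / a\<^sub>d \<in> Pw r2)"
      unfolding r1_def r2_def by (rule reduce[OF card q1 assms(9) assms(10) assms(11) assms(12) t_def])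
    finally show ?thesis .
  qed
  have part1: "\<beta> = 0 \<longrightarrow>
       (L_graph (\<lambda>x. \<alpha> * x ^ (q ^ k) + \<beta> * x) \<inter> L_twisted q h (\<lambda>y. a\<^sub>d * y ^ (q ^ d)) \<noteq> {}
        \<longleftrightarrow> rel_norm q n (nat (gcd (int n) (gcd (int k) (int d - int h)))) (a\<^sub>d / \<alpha>) = 1)"
  proof
    assume b0: "\<beta> = 0"
    define c where "c = a\<^sub>d / \<alpha>"
    have c0: "c \<noteq> 0" using assms(6) assms(9) unfolding c_def by simp
    have step: "(\<exists>u\<in>Pw r1. (\<alpha> * u + \<beta>) / a\<^sub>d \<in> Pw r2) \<longleftrightarrow> (\<exists>u\<in>Pw r1. \<exists>v\<in>Pw r2. c * v = u)"
    proof
      assume "\<exists>u\<in>Pw r1. (\<alpha> * u + \<beta>) / a\<^sub>d \<in> Pw r2"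
      then obtain u where u: "u \<in> Pw r1" "(\<alpha> * u + \<beta>) / a\<^sub>d \<in> Pw r2" by blast
      have "c * ((\<alpha> * u + \<beta>) / a\<^sub>d) = u" using b0 assms(6) assms(9) unfolding c_def by simp
      then show "\<exists>u\<in>Pw r1. \<exists>v\<in>Pw r2. c * v = u" using u by blast
    next
      assume "\<exists>u\<in>Pw r1. \<exists>v\<in>Pw r2. c * v = u"
      then obtain u v where uv: "u \<in> Pw r1" "v \<in> Pw r2" "c * v = u" by blast
      have "(\<alpha> * u + \<beta>) / a\<^sub>d = v" unfolding uv(3)[symmetric] using b0 assms(6) assms(9) unfolding c_def by simp
      then show "\<exists>u\<in>Pw r1. (\<alpha> * u + \<beta>) / a\<^sub>d \<in> Pw r2" using uv by blast
    qed
    have e: "nat (gcd (int n) (gcd (int k) (int d - int h))) = gcd (gcd k t) n"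
    proof -
      have "gcd (int k) (int d - int h) = gcd (int k) \<bar>int d - int h\<bar>" by simp
      also have "\<bar>int d - int h\<bar> = int t" unfolding t_def by simp
      finally have "gcd (int k) (int d - int h) = int (gcd k t)" by simp
      then have "nat (gcd (int n) (gcd (int k) (int d - int h))) = gcd n (gcd k t)" by simp
      then show ?thesis by (simp add: gcd.commute)
    qed
    have D: "gcd (gcd r1 r2) (q^n - 1) = q^(gcd (gcd k t) n) - 1"
      unfolding r1_def r2_def gcd_pow_minus_one[OF q1] gcd_pow_minus_one[OF q1] ..
    have "L_graph (\<lambda>x. \<alpha> * x ^ (q ^ k) + \<beta> * x) \<inter> L_twisted q h (\<lambda>y. a\<^sub>d * y ^ (q ^ d)) \<noteq> {}
        \<longleftrightarrow> (\<exists>u\<in>Pw r1. \<exists>v\<in>Pw r2. c * v = u)" using LHS_iff step by simp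
    also have "\<dots> \<longleftrightarrow> c ^ ((card (UNIV::'a set) - 1) div gcd (gcd r1 r2) (card (UNIV::'a set) - 1)) = 1"
      by (rule Pw_prod_iff[OF r1p r2p c0])
    also have "\<dots> \<longleftrightarrow> rel_norm q n (nat (gcd (int n) (gcd (int k) (int d - int h)))) (a\<^sub>d / \<alpha>) = 1"
      unfolding N D e rel_norm_def c_def ..
    finally show "L_graph (\<lambda>x. \<alpha> * x ^ (q ^ k) + \<beta> * x) \<inter> L_twisted q h (\<lambda>y. a\<^sub>d * y ^ (q ^ d)) \<noteq> {}
        \<longleftrightarrow> rel_norm q n (nat (gcd (int n) (gcd (int k) (int d - int h)))) (a\<^sub>d / \<alpha>) = 1" .
  qed
  have part2: "(\<beta> \<noteq> 0 \<and> 2 * (k + nat \<bar>int d - int h\<bar>) \<le> n) \<longrightarrow>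
       L_graph (\<lambda>x. \<alpha> * x ^ (q ^ k) + \<beta> * x) \<inter> L_twisted q h (\<lambda>y. a\<^sub>d * y ^ (q ^ d)) \<noteq> {}"
  proof
    assume H: "\<beta> \<noteq> 0 \<and> 2 * (k + nat \<bar>int d - int h\<bar>) \<le> n"
    have b0: "\<beta> \<noteq> 0" using H by simp
    have kt: "2 * (k + t) \<le> n" using H unfolding t_def by simp
    define A where "A = - \<beta> / \<alpha>"
    define B where "B = \<beta> / a\<^sub>d"
    have A0: "A \<noteq> 0" using b0 assms(6) unfolding A_def by simp
    have B0: "B \<noteq> 0" using b0 assms(9) unfolding B_def by simp
    have m1: "gcd r1 (q^n - 1) \<le> q^k - 1"
      using r1p unfolding r1_def by (simp add: gcd_le1_nat)
    have m2: "gcd r2 (q^n - 1) \<le> q^t - 1"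
      using r2p unfolding r2_def by (simp add: gcd_le1_nat)
    have ineq: "(real (gcd r1 (card (UNIV::'a set) - 1) * gcd r2 (card (UNIV::'a set) - 1)) - 1)
        * sqrt (real (card (UNIV::'a set))) < real (card (UNIV::'a set)) - 2"
      unfolding N unfolding card by (rule final_ineq[OF q2 assms(7) t1 kt m1 m2])
    obtain s where s: "s \<noteq> 0" "s \<noteq> 1" "A * s \<in> Pw r1" "B * (1 - s) \<in> Pw r2"
      using count_exists[OF r1p r2p A0 B0 ineq] by blast
    have "(\<alpha> * (A * s) + \<beta>) / a\<^sub>d = B * (1 - s)"
      using assms(6) assms(9) unfolding A_def B_def by (simp add: field_simps)
    then have "\<exists>u\<in>Pw r1. (\<alpha> * u + \<beta>) / a\<^sub>d \<in> Pw r2" using s by (intro bexI[of _ "A * s"]) auto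
    then show "L_graph (\<lambda>x. \<alpha> * x ^ (q ^ k) + \<beta> * x) \<inter> L_twisted q h (\<lambda>y. a\<^sub>d * y ^ (q ^ d)) \<noteq> {}"
      using LHS_iff by simp
  qed
  show ?thesis using part1 part2 by blast
qed

end
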